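(* For every positive integer $n$, \[ \sum_{k=1}^{n}(4k+1)\frac{(\tfrac{1}{2})_k^3}{k!^3}\frac{(-n)_k}{(\tfrac{3}{2}+n)_k}\sum_{i=1}^{2k}\frac{(-1)^i}{i^2} =\frac{(\tfrac{1}{2})_n(\tfrac{3}{2})_n}{n!^2}\sum_{j=1}^{n}\frac{1}{4j^2}. \]
   Context: For a complex number $x$ and a nonnegative integer $n$, $(x)_n=x(x+1)\cdots(x+n-1)$ denotes the shifted factorial (Pochhammer symbol), with $(x)_0=1$. *)

theory Defs
  imports Complex_Main
begin

end

theory Submission
  imports Defs
begin

definition tt :: "nat \<Rightarrow> real" where
  "tt k = (pochhammer (1/2) k)^3 / (fact k)^3"
definition cc :: "nat \<Rightarrow> real" where
  "cc n = pochhammer (1/2) n * pochhammer (3/2) n / (fact n)^2"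
definition ww :: "nat \<Rightarrow> nat \<Rightarrow> real" where
  "ww n k = pochhammer (- real n) k / pochhammer (3/2 + real n) k / cc n"

lemma cc_pos: "cc n > 0"
  unfolding cc_def by (intro divide_pos_pos mult_pos_pos pochhammer_pos) auto

lemma cc_Suc: "cc (Suc n) = cc n * ((n+1/2)*(n+3/2)/(n+1)^2)"
  unfolding cc_def by (simp add: pochhammer_Suc field_simps power2_eq_square)

lemma tt_0: "tt 0 = 1" by (simp add: tt_def)
lemma tt_Suc: "tt (Suc k) = tt k * ((real k+1/2)^3/(real k+1)^3)"
proof -
  have "tt (Suc k) = (pochhammer (1/2) k * (1/2 + real k))^3 / (fact k * (real k + 1))^3"
    unfolding tt_def by (simp add: pochhammer_Suc algebra_simps)
  also have "\<dots> = tt k * ((real k+1/2)^3/(real k+1)^3)"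
    unfolding tt_def power_mult_distrib by (simp add: algebra_simps of_nat_power)
  finally show ?thesis .
qed

lemma ww_0: "ww n 0 = 1 / cc n" by (simp add: ww_def)
lemma ww_Suc: "ww n (Suc k) = ww n k * ((real k - real n) / (real k + real n + 3/2))"
proof -
  have "pochhammer (3/2 + real n) k > 0" by (intro pochhammer_pos) auto
  moreover have "(3/2 + real n + real k) > 0" by auto
  ultimately show ?thesis unfolding ww_def using cc_pos[of n]
    by (simp add: pochhammer_Suc field_simps)
qed

lemma key_aux:
  fixes k n :: real assumes "k \<ge> 0" "n \<ge> 0"
  shows "((n + 1 - k) * (n + 3/2 + k) * (n + 1/2) / (n + 1)^3) * ((k - n) / (k + n + 3/2))
    = ((k - (n+1)) / (k + (n+1) + 3/2)) * ((n + 1 - (k+1)) * (n + 3/2 + (k+1)) * (n + 1/2) / (n + 1)^3)"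
proof -
  have a: "k + n + 3/2 \<noteq> 0" "k + (n+1) + 3/2 \<noteq> 0" "(n+1)^3 \<noteq> 0" using assms by auto
  show ?thesis using a by (simp add: divide_simps) (simp add: algebra_simps)
qed

lemma ww_shift: "ww n k = ww (Suc n) k * ((real n + 1 - real k) * (real n + 3/2 + real k) * (real n + 1/2) / (real n + 1)^3)"
proof (induction k)
  case 0
  have p: "cc n > 0" "real n + 1 > 0" "real n + 1/2 > 0" "real n + 3/2 > 0" using cc_pos[of n] by auto
  have "ww (Suc n) 0 * ((real n + 1 - real 0) * (real n + 3/2 + real 0) * (real n + 1/2) / (real n + 1)^3)
     = (1 / (cc n * ((real n+1/2)*(real n+3/2)/(real n+1)^2))) * ((real n + 1) * (real n + 3/2) * (real n + 1/2) / (real n + 1)^3)"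
    by (simp add: ww_0 cc_Suc)
  also have "\<dots> = 1 / cc n" using p by (simp add: divide_simps power2_eq_square power3_eq_cube)
  finally show ?case by (simp add: ww_0)
next
  case (Suc k)
  have d1: "real k + real n + 3/2 > 0" "real k + real (Suc n) + 3/2 > 0" by auto
  have key: "((real n + 1 - real k) * (real n + 3/2 + real k) * (real n + 1/2) / (real n + 1)^3)
     * ((real k - real n) / (real k + real n + 3/2))
    = ((real k - real (Suc n)) / (real k + real (Suc n) + 3/2))
     * ((real n + 1 - real (Suc k)) * (real n + 3/2 + real (Suc k)) * (real n + 1/2) / (real n + 1)^3)"
    using key_aux[of "real k" "real n"] by simp
  define X where "X j = ((real n + 1 - real j) * (real n + 3/2 + real j) * (real n + 1/2) / (real n + 1)^3)" for j
  define r1 where "r1 = ((real k - real n) / (real k + real n + 3/2))"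
  define r2 where "r2 = ((real k - real (Suc n)) / (real k + real (Suc n) + 3/2))"
  have IH: "ww n k = ww (Suc n) k * X k" using Suc.IH unfolding X_def .
  have "ww n (Suc k) = ww n k * r1" unfolding r1_def by (rule ww_Suc)
  also have "\<dots> = ww (Suc n) k * (X k * r1)" unfolding IH by (rule mult.assoc)
  also have "\<dots> = ww (Suc n) k * (r2 * X (Suc k))" using key unfolding X_def r1_def r2_def by simp
  also have "\<dots> = ww (Suc n) (Suc k) * X (Suc k)" unfolding r2_def ww_Suc[of "Suc n"] by (rule mult.assoc[symmetric])
  finally show ?case unfolding X_def .
qed

definition FF :: "nat \<Rightarrow> nat \<Rightarrow> real" where
  "FF n k = (4 * real k + 1) * tt k * ww n k"
definition GG :: "nat \<Rightarrow> nat \<Rightarrow> real" where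
  "GG n k = -2 * real k ^ 3 * (real k + real n + 3/2) / (real n + 1)^3 * tt k * ww (Suc n) k"

lemma ww_vanish: "ww n (Suc n) = 0"
  by (simp add: ww_Suc)

lemma WZ_scalar: fixes k n :: real assumes "k \<ge> 0" "n \<ge> 0" shows
 "(4*k+1) - (4*k+1) * ((n + 1 - k) * (n + 3/2 + k) * (n + 1/2) / (n + 1)^3)
  = -2 * (k+1)^3 * (k + n + 5/2) / (n+1)^3 * ((k+1/2)^3/(k+1)^3) * ((k-(n+1))/(k+(n+1)+3/2))
   - (-2 * k^3 * (k + n + 3/2) / (n+1)^3)"
proof -
  have a: "k+(n+1)+3/2 \<noteq> 0" "(n+1)^3 \<noteq> 0" "(k+1)^3 \<noteq> 0" "k + n + 5/2 = k+(n+1)+3/2" using assms by auto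
  show ?thesis using a apply (simp add: divide_simps) apply algebra done
qed

lemma WZ: "FF (Suc n) k - FF n k = GG n (Suc k) - GG n k"
proof -
  define T where "T = tt k * ww (Suc n) k"
  have e1: "FF (Suc n) k - FF n k = T * ((4*real k+1) - (4*real k+1) * ((real n + 1 - real k) * (real n + 3/2 + real k) * (real n + 1/2) / (real n + 1)^3))"
    unfolding FF_def T_def by (subst ww_shift[of n k]) (simp add: algebra_simps)
  have e2: "GG n (Suc k) - GG n k = T * (-2 * (real k+1)^3 * (real k + real n + 5/2) / (real n+1)^3 * ((real k+1/2)^3/(real k+1)^3) * ((real k-(real n+1))/(real k+(real n+1)+3/2))
   - (-2 * real k^3 * (real k + real n + 3/2) / (real n+1)^3))"
    unfolding GG_def T_def tt_Suc ww_Suc[of "Suc n"] by (simp add: algebra_simps)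
  show ?thesis unfolding e1 e2 by (subst WZ_scalar) auto
qed

lemma sum_FF: "(\<Sum>k<Suc n. FF n k) = 1"
proof (induction n)
  case 0
  show ?case by (simp add: FF_def tt_0 ww_0 cc_def)
next
  case (Suc n)
  have "(\<Sum>k<Suc (Suc n). FF (Suc n) k) = (\<Sum>k<Suc (Suc n). FF n k + (GG n (Suc k) - GG n k))"
    using WZ by (intro sum.cong) (auto simp: algebra_simps)
  also have "\<dots> = (\<Sum>k<Suc (Suc n). FF n k) + (GG n (Suc (Suc n)) - GG n 0)"
    by (simp add: sum.distrib sum_lessThan_telescope)
  also have "\<dots> = 1"
    using Suc.IH by (simp add: FF_def GG_def ww_vanish ww_Suc[of "Suc n" "Suc n"])
  finally show ?case .
qed

definition HH :: "nat \<Rightarrow> real" where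
  "HH k = (\<Sum>i=1..2*k. (-1) ^ i / (real i) ^ 2)"

lemma HH_0: "HH 0 = 0" by (simp add: HH_def)
lemma HH_Suc: "HH (Suc k) - HH k = 1/(2*real k+2)^2 - 1/(2*real k+1)^2"
proof -
  have "2 * Suc k = Suc (Suc (2*k))" by simp
  then have "HH (Suc k) = HH k + (-1)^(Suc (2*k)) / (real (Suc (2*k)))^2 + (-1)^(Suc (Suc (2*k))) / (real (Suc (Suc (2*k))))^2"
    unfolding HH_def by (simp add: sum.cl_ivl_Suc)
  then show ?thesis by (simp add: algebra_simps)
qed

definition EE :: "nat \<Rightarrow> nat \<Rightarrow> real" where
  "EE N j = real j * (real N - real j + 1) * tt j * ww N (j - 1)"

lemma point: "GG n (Suc j) * (HH (Suc j) - HH j)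
   = - FF (Suc n) j / (4*(real n+1)^2) + (EE (Suc n) (Suc j) - EE (Suc n) j) / (2*(real n+1)^3)"
proof (cases j)
  case 0
  have a: "real n + 5/2 \<noteq> 0" "real n + 1 \<noteq> 0" by auto
  show ?thesis unfolding 0 HH_Suc GG_def FF_def EE_def tt_Suc ww_Suc tt_0
    using a by (simp add: divide_simps) algebra
next
  case (Suc i)
  have a: "real n + 5/2 + real i \<noteq> 0" "real n + 7/2 + real i \<noteq> 0" "real n + 1 \<noteq> 0" "2*real i + 3 \<noteq> 0" "real i + 1 \<noteq> 0" "real i + 2 \<noteq> 0" by auto
  show ?thesis unfolding Suc HH_Suc GG_def FF_def EE_def
    using a by (simp add: divide_simps ww_Suc tt_Suc) algebra
qed

lemma abel: "(\<Sum>k<M. (g (Suc k) - g k) * h k) = g M * h M - g 0 * h 0 - (\<Sum>k<M. g (Suc k) * (h (Suc k) - h k))"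
  for g h :: "nat \<Rightarrow> real"
  by (induction M) (simp_all add: algebra_simps)

lemma UU: "(\<Sum>k<Suc n. FF n k * HH k) = (\<Sum>j=1..n. 1/(4*(real j)^2))"
proof (induction n)
  case 0
  show ?case by (simp add: HH_0)
next
  case (Suc n)
  have z1: "FF n (Suc n) = 0" by (simp add: FF_def ww_vanish)
  have z2: "GG n (Suc (Suc n)) = 0" by (simp add: GG_def ww_Suc[of "Suc n" "Suc n"])
  have z3: "EE (Suc n) (Suc (Suc n)) = 0" "EE (Suc n) 0 = 0" by (simp_all add: EE_def)
  have "(\<Sum>k<Suc (Suc n). FF (Suc n) k * HH k)
      = (\<Sum>k<Suc (Suc n). FF n k * HH k) + (\<Sum>k<Suc (Suc n). (GG n (Suc k) - GG n k) * HH k)"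
  proof -
    have w: "FF (Suc n) k = FF n k + (GG n (Suc k) - GG n k)" for k using WZ[of n k] by linarith
    show ?thesis unfolding sum.distrib[symmetric] by (simp add: w algebra_simps)
  qed
  also have "(\<Sum>k<Suc (Suc n). FF n k * HH k) = (\<Sum>j=1..n. 1/(4*(real j)^2))"
    using Suc.IH z1 by simp
  also have "(\<Sum>k<Suc (Suc n). (GG n (Suc k) - GG n k) * HH k)
     = - (\<Sum>k<Suc (Suc n). GG n (Suc k) * (HH (Suc k) - HH k))"
    unfolding abel using z2 by (simp add: HH_0 GG_def)
  also have "(\<Sum>k<Suc (Suc n). GG n (Suc k) * (HH (Suc k) - HH k))
     = (\<Sum>k<Suc (Suc n). - FF (Suc n) k / (4*(real n+1)^2) + (EE (Suc n) (Suc k) - EE (Suc n) k) / (2*(real n+1)^3))"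
    using point by simp
  also have "\<dots> = - (\<Sum>k<Suc (Suc n). FF (Suc n) k) / (4*(real n+1)^2) + (EE (Suc n) (Suc (Suc n)) - EE (Suc n) 0) / (2*(real n+1)^3)"
    unfolding sum.distrib sum_divide_distrib[symmetric] sum_negf sum_lessThan_telescope ..
  also have "\<dots> = - 1 / (4*(real n+1)^2)" using sum_FF[of "Suc n"] z3 by simp
  finally show ?case by (simp add: add_ac)
qed

theorem mainTheorem7:
  fixes n :: nat
  assumes "n \<ge> 1"
  shows "(\<Sum>k=1..n. (4 * real k + 1) * (pochhammer (1/2) k) ^ 3 / (fact k) ^ 3
            * pochhammer (- real n) k / pochhammer (3/2 + real n) k
            * (\<Sum>i=1..2*k. (-1) ^ i / (real i) ^ 2))
         = pochhammer (1/2) n * pochhammer (3/2) n / (fact n) ^ 2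
            * (\<Sum>j=1..n. 1 / (4 * (real j) ^ 2))"
proof -
  have c: "cc n \<noteq> 0" using cc_pos[of n] by simp
  have tm: "(4 * real k + 1) * (pochhammer (1/2) k) ^ 3 / (fact k) ^ 3
            * pochhammer (- real n) k / pochhammer (3/2 + real n) k
            * (\<Sum>i=1..2*k. (-1) ^ i / (real i) ^ 2) = cc n * (FF n k * HH k)" for k
  proof -
    have p: "pochhammer (3/2 + real n) k \<noteq> 0" using pochhammer_pos[of "3/2 + real n" k] by simp
    show ?thesis unfolding FF_def tt_def ww_def HH_def using c p by (simp add: field_simps)
  qed
  have "(\<Sum>k=1..n. (4 * real k + 1) * (pochhammer (1/2) k) ^ 3 / (fact k) ^ 3
            * pochhammer (- real n) k / pochhammer (3/2 + real n) k
            * (\<Sum>i=1..2*k. (-1) ^ i / (real i) ^ 2)) = cc n * (\<Sum>k=1..n. FF n k * HH k)"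
    unfolding tm by (rule sum_distrib_left[symmetric])
  also have "(\<Sum>k=1..n. FF n k * HH k) = (\<Sum>k<Suc n. FF n k * HH k)"
  proof -
    have "{..<Suc n} = insert 0 {1..n}" by auto
    then show ?thesis by (simp add: HH_0)
  qed
  also note UU
  finally show ?thesis unfolding cc_def .
qed

end
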